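(* Let $v,w$ be positive integers, $\theta\in[0,1]$, and let $K_{v,w}$ be the complete bipartite graph with parts $V$, $W$, $|V|=v$, $|W|=w$. For $1\le i\le 4$ let $P^i_m(K_{v,w})$ be the probability that the robber remains free after $m$ moves of the tipsy cop and drunken robber game when the game starts in Position $i$ (whenever that position exists). Then for all $m\ge 0$, \begin{align*} P_m^1(K_{v,w})&=\left(\tfrac{v-1}{v}\right)^{\lfloor\frac{m+3}{4}\rfloor}\left(\tfrac{w-1}{w}\right)^{\lfloor\frac{m+1}{4}\rfloor},\\ P_m^2(K_{v,w})&=\theta^{\lfloor\frac{m}{2}\rfloor}\left(\tfrac{v-1}{v}\right)^{\lfloor\frac{m}{4}\rfloor}\left(\tfrac{w-1}{w}\right)^{\lfloor\frac{m+2}{4}\rfloor},\\ P_m^3(K_{v,w})&=\left(\tfrac{v-1}{v}\right)^{\lfloor\frac{m+1}{4}\rfloor}\left(\tfrac{w-1}{w}\right)^{\lfloor\frac{m+3}{4}\rfloor},\\ P_m^4(K_{v,w})&=\theta^{\lfloor\frac{m}{2}\rfloor}\left(\tfrac{v-1}{v}\right)^{\lfloor\frac{m+2}{4}\rfloor}\left(\tfrac{w-1}{w}\right)^{\lfloor\frac{m}{4}\rfloor}. \end{align*}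
   Context: Tipsy cop and drunken robber game on a finite connected graph $G$: a cop and a robber are placed at distinct vertices. Moves are numbered $1,2,3,\dots$; the robber makes the odd-numbered moves and the cop the even-numbered moves, and on each move the mover must move to a vertex adjacent to its current vertex (staying put is not allowed). The robber always moves to a neighbor chosen uniformly at random. The cop, independently at each of her moves, with probability $\theta$ moves to a neighbor chosen uniformly at random, and with probability $1-\theta$ makes a directed move to a neighbor lying on a shortest path to the robber's current vertex (in particular onto the robber's vertex if it is adjacent). All random choices are independent. The robber is captured (and the game ends) as soon as both occupy the same vertex. Starting positions on $K_{v,w}$: Position 1: the cop is at a vertex of $V$ and the robber at a vertex of $W$; Position 2: cop and robber are at two distinct vertices of $V$; Position 3: the robber is at a vertex of $V$ and the cop at a vertex of $W$; Position 4: cop and robber are at two distinct vertices of $W$. *)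

theory Defs
  imports Complex_Main
begin

text \<open>A graph is given by a finite vertex set Vs and a symmetric irreflexive
adjacency relation E (only relating vertices of Vs).\<close>

definition nbrs :: "'a set \<Rightarrow> ('a \<Rightarrow> 'a \<Rightarrow> bool) \<Rightarrow> 'a \<Rightarrow> 'a set" where
  "nbrs Vs E x = {y \<in> Vs. E x y}"

fun reach :: "('a \<Rightarrow> 'a \<Rightarrow> bool) \<Rightarrow> nat \<Rightarrow> 'a \<Rightarrow> 'a \<Rightarrow> bool" where
  "reach E 0 x y = (x = y)"
| "reach E (Suc n) x y = (\<exists>z. E x z \<and> reach E n z y)"

definition gdist :: "('a \<Rightarrow> 'a \<Rightarrow> bool) \<Rightarrow> 'a \<Rightarrow> 'a \<Rightarrow> nat" where
  "gdist E x y = (LEAST n. reach E n x y)"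

definition avg :: "'a set \<Rightarrow> ('a \<Rightarrow> real) \<Rightarrow> real" where
  "avg A f = (\<Sum>y\<in>A. f y) / real (card A)"

definition valid_dir :: "'a set \<Rightarrow> ('a \<Rightarrow> 'a \<Rightarrow> bool) \<Rightarrow> ('a \<Rightarrow> 'a \<Rightarrow> 'a) \<Rightarrow> bool" where
  "valid_dir Vs E d \<longleftrightarrow> (\<forall>c\<in>Vs. \<forall>r\<in>Vs. c \<noteq> r \<longrightarrow>
      d c r \<in> nbrs Vs E c \<and> gdist E (d c r) r + 1 = gdist E c r)"

text \<open>freeP Vs E \<theta> d m rt c r : probability that the robber is still free after m
further moves, from cop position c and robber position r, where rt says whether the
next move is the robber's.\<close>
fun freeP :: "'a set \<Rightarrow> ('a \<Rightarrow> 'a \<Rightarrow> bool) \<Rightarrow> real \<Rightarrow> ('a \<Rightarrow> 'a \<Rightarrow> 'a)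
               \<Rightarrow> nat \<Rightarrow> bool \<Rightarrow> 'a \<Rightarrow> 'a \<Rightarrow> real" where
  "freeP Vs E \<theta> d 0 rt c r = (if c = r then 0 else 1)"
| "freeP Vs E \<theta> d (Suc m) rt c r =
     (if c = r then 0
      else if rt then avg (nbrs Vs E r) (\<lambda>r'. freeP Vs E \<theta> d m False c r')
      else \<theta> * avg (nbrs Vs E c) (\<lambda>c'. freeP Vs E \<theta> d m True c' r)
           + (1 - \<theta>) * freeP Vs E \<theta> d m True (d c r) r)"

definition P_free :: "'a set \<Rightarrow> ('a \<Rightarrow> 'a \<Rightarrow> bool) \<Rightarrow> real \<Rightarrow> ('a \<Rightarrow> 'a \<Rightarrow> 'a)
               \<Rightarrow> nat \<Rightarrow> 'a \<Rightarrow> 'a \<Rightarrow> real" where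
  "P_free Vs E \<theta> d m c r = freeP Vs E \<theta> d m True c r"

definition KV :: "nat \<Rightarrow> (nat + nat) set" where "KV v = Inl ` {..<v}"
definition KW :: "nat \<Rightarrow> (nat + nat) set" where "KW w = Inr ` {..<w}"
definition Kverts :: "nat \<Rightarrow> nat \<Rightarrow> (nat + nat) set" where "Kverts v w = KV v \<union> KW w"
definition Kadj :: "nat \<Rightarrow> nat \<Rightarrow> (nat + nat) \<Rightarrow> (nat + nat) \<Rightarrow> bool" where
  "Kadj v w x y \<longleftrightarrow> (x \<in> KV v \<and> y \<in> KW w) \<or> (x \<in> KW w \<and> y \<in> KV v)"

end

theory Submission
  imports Defs
begin

lemma avg_const:
  assumes "finite A" "A \<noteq> {}" "\<And>x. x \<in> A \<Longrightarrow> f x = X"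
  shows "avg A f = X"
proof -
  have "(\<Sum>y\<in>A. f y) = real (card A) * X" using assms(3) by simp
  moreover have "card A > 0" using assms by (simp add: card_gt_0_iff)
  ultimately show ?thesis unfolding avg_def by simp
qed

lemma avg_except:
  assumes "finite A" "c \<in> A" "f c = 0" "\<And>x. x \<in> A \<Longrightarrow> x \<noteq> c \<Longrightarrow> f x = X"
  shows "avg A f = (real (card A) - 1) / real (card A) * X"
proof -
  have "(\<Sum>y\<in>A. f y) = f c + (\<Sum>y\<in>A-{c}. f y)"
    using assms by (simp add: sum.remove)
  also have "\<dots> = real (card (A - {c})) * X" using assms(3,4) by simp
  also have "\<dots> = (real (card A) - 1) * X" using assms(1,2)
    by (simp add: card_Diff_singleton of_nat_diff card_gt_0_iff) (metis One_nat_def card_gt_0_iff empty_iff of_nat_1 of_nat_diff Suc_leI)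
  finally show ?thesis unfolding avg_def by simp
qed

lemma freeP_cap: "freeP Vs E \<theta> d m rt c c = 0"
  by (cases m) auto

lemma KVW_disj: "x \<in> KV v \<Longrightarrow> x \<notin> KW w"
  by (auto simp: KV_def KW_def)

lemma nbrs_V: "c \<in> KV v \<Longrightarrow> nbrs (Kverts v w) (Kadj v w) c = KW w"
  by (auto simp: nbrs_def Kverts_def Kadj_def KV_def KW_def)

lemma nbrs_W: "c \<in> KW w \<Longrightarrow> nbrs (Kverts v w) (Kadj v w) c = KV v"
  by (auto simp: nbrs_def Kverts_def Kadj_def KV_def KW_def)

lemma card_KV: "card (KV v) = v" by (simp add: KV_def card_image)
lemma card_KW: "card (KW w) = w" by (simp add: KW_def card_image)
lemma fin_KV: "finite (KV v)" by (simp add: KV_def)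
lemma fin_KW: "finite (KW w)" by (simp add: KW_def)

lemma gdist1:
  assumes "Kadj v w c r"
  shows "gdist (Kadj v w) c r = 1"
  unfolding gdist_def
proof (rule Least_equality)
  show "reach (Kadj v w) 1 c r" using assms by simp
  fix n assume "reach (Kadj v w) n c r"
  moreover have "c \<noteq> r" using assms by (auto simp: Kadj_def KV_def KW_def)
  ultimately show "1 \<le> n" by (cases n) auto
qed

lemma gdist0:
  assumes "gdist E x r = 0" "reach E n x r"
  shows "x = r"
proof -
  have "reach E (LEAST n. reach E n x r) x r" using assms(2) by (rule LeastI)
  then show ?thesis using assms(1) by (simp add: gdist_def)
qed

lemma dir_adj:
  assumes "valid_dir (Kverts v w) (Kadj v w) d" "v \<ge> 1" "w \<ge> 1"
    and "Kadj v w c r" "c \<in> Kverts v w" "r \<in> Kverts v w"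
  shows "d c r = r"
proof -
  have ne: "c \<noteq> r" using assms(4) by (auto simp: Kadj_def KV_def KW_def)
  have g: "gdist (Kadj v w) c r = 1" using assms(4) by (rule gdist1)
  have dn: "d c r \<in> nbrs (Kverts v w) (Kadj v w) c"
    and g2: "gdist (Kadj v w) (d c r) r + 1 = gdist (Kadj v w) c r"
    using assms(1,5,6) ne unfolding valid_dir_def by auto
  have g0: "gdist (Kadj v w) (d c r) r = 0" using g g2 by simp
  have "Inl 0 \<in> KV v" "Inr 0 \<in> KW w" using assms(2,3) by (auto simp: KV_def KW_def)
  then have "\<exists>n. reach (Kadj v w) n (d c r) r"
    using dn assms(4)
    apply (cases "d c r = r")
     apply (rule exI[of _ 0]; simp)
    apply (rule exI[of _ 2])
    apply (auto simp: nbrs_def Kadj_def numeral_2_eq_2)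
    done
  then show ?thesis using g0 gdist0 by metis
qed

lemma dir_same:
  assumes "valid_dir (Kverts v w) (Kadj v w) d" "c \<in> Kverts v w" "r \<in> Kverts v w" "c \<noteq> r"
  shows "d c r \<in> nbrs (Kverts v w) (Kadj v w) c"
  using assms unfolding valid_dir_def by auto


context
  fixes v w :: nat and \<theta> :: real and d :: "nat + nat \<Rightarrow> nat + nat \<Rightarrow> nat + nat"
  assumes v1: "v \<ge> 1" and w1: "w \<ge> 1"
    and vd: "valid_dir (Kverts v w) (Kadj v w) d"
begin

abbreviation "F \<equiv> freeP (Kverts v w) (Kadj v w) \<theta> d"

lemma inV: "x \<in> KV v \<Longrightarrow> x \<in> Kverts v w" by (simp add: Kverts_def)
lemma inW: "x \<in> KW w \<Longrightarrow> x \<in> Kverts v w" by (simp add: Kverts_def)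
lemma KVne: "KV v \<noteq> {}" using v1 by (auto simp: KV_def lessThan_empty_iff)
lemma KWne: "KW w \<noteq> {}" using w1 by (auto simp: KW_def lessThan_empty_iff)

lemma cop0: "c \<noteq> r \<Longrightarrow> F 0 rt c r = 1" by simp

lemma robA:
  assumes "c \<in> KV v" "r \<in> KW w" "\<And>r'. r' \<in> KV v \<Longrightarrow> r' \<noteq> c \<Longrightarrow> F m False c r' = X"
  shows "F (Suc m) True c r = (real v - 1) / real v * X"
proof -
  have "c \<noteq> r" using assms KVW_disj by metis
  then have "F (Suc m) True c r = avg (KV v) (\<lambda>r'. F m False c r')"
    using assms(2) by (simp add: nbrs_W)
  also have "\<dots> = (real v - 1) / real v * X"
    using avg_except[OF fin_KV assms(1), of "\<lambda>r'. F m False c r'" X] assms(3)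
    by (simp add: freeP_cap card_KV)
  finally show ?thesis .
qed

lemma robC:
  assumes "c \<in> KW w" "r \<in> KV v" "\<And>r'. r' \<in> KW w \<Longrightarrow> r' \<noteq> c \<Longrightarrow> F m False c r' = X"
  shows "F (Suc m) True c r = (real w - 1) / real w * X"
proof -
  have "c \<noteq> r" using assms KVW_disj by metis
  then have "F (Suc m) True c r = avg (KW w) (\<lambda>r'. F m False c r')"
    using assms(2) by (simp add: nbrs_V)
  also have "\<dots> = (real w - 1) / real w * X"
    using avg_except[OF fin_KW assms(1), of "\<lambda>r'. F m False c r'" X] assms(3)
    by (simp add: freeP_cap card_KW)
  finally show ?thesis .
qed

lemma robB:
  assumes "c \<noteq> r" "r \<in> KV v" "\<And>r'. r' \<in> KW w \<Longrightarrow> F m False c r' = X"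
  shows "F (Suc m) True c r = X"
proof -
  have "F (Suc m) True c r = avg (KW w) (\<lambda>r'. F m False c r')"
    using assms by (simp add: nbrs_V)
  also have "\<dots> = X" using avg_const[OF fin_KW KWne] assms(3) by simp
  finally show ?thesis .
qed

lemma robD:
  assumes "c \<noteq> r" "r \<in> KW w" "\<And>r'. r' \<in> KV v \<Longrightarrow> F m False c r' = X"
  shows "F (Suc m) True c r = X"
proof -
  have "F (Suc m) True c r = avg (KV v) (\<lambda>r'. F m False c r')"
    using assms by (simp add: nbrs_W)
  also have "\<dots> = X" using avg_const[OF fin_KV KVne] assms(3) by simp
  finally show ?thesis .
qed

lemma copVV:
  assumes "c \<in> KV v" "r \<in> KV v" "c \<noteq> r" "\<And>c'. c' \<in> KW w \<Longrightarrow> F m True c' r = X"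
  shows "F (Suc m) False c r = X"
proof -
  have "d c r \<in> KW w" using dir_same[OF vd inV[OF assms(1)] inV[OF assms(2)] assms(3)]
    nbrs_V[OF assms(1)] by simp
  then have "F (Suc m) False c r = \<theta> * avg (KW w) (\<lambda>c'. F m True c' r) + (1 - \<theta>) * X"
    using assms by (simp add: nbrs_V)
  also have "\<dots> = X" using avg_const[OF fin_KW KWne] assms(4) by (simp add: algebra_simps)
  finally show ?thesis .
qed

lemma copWW:
  assumes "c \<in> KW w" "r \<in> KW w" "c \<noteq> r" "\<And>c'. c' \<in> KV v \<Longrightarrow> F m True c' r = X"
  shows "F (Suc m) False c r = X"
proof -
  have "d c r \<in> KV v" using dir_same[OF vd inW[OF assms(1)] inW[OF assms(2)] assms(3)]
    nbrs_W[OF assms(1)] by simp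
  then have "F (Suc m) False c r = \<theta> * avg (KV v) (\<lambda>c'. F m True c' r) + (1 - \<theta>) * X"
    using assms by (simp add: nbrs_W)
  also have "\<dots> = X" using avg_const[OF fin_KV KVne] assms(4) by (simp add: algebra_simps)
  finally show ?thesis .
qed

lemma copVW:
  assumes "c \<in> KV v" "r \<in> KW w" "\<And>c'. c' \<in> KW w \<Longrightarrow> c' \<noteq> r \<Longrightarrow> F m True c' r = X"
  shows "F (Suc m) False c r = \<theta> * ((real w - 1) / real w * X)"
proof -
  have adj: "Kadj v w c r" using assms by (simp add: Kadj_def)
  have "d c r = r" using dir_adj[OF vd v1 w1 adj inV[OF assms(1)] inW[OF assms(2)]] .
  moreover have "c \<noteq> r" using assms KVW_disj by metis
  ultimately have "F (Suc m) False c r = \<theta> * avg (KW w) (\<lambda>c'. F m True c' r)"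
    using assms by (simp add: nbrs_V freeP_cap)
  also have "\<dots> = \<theta> * ((real w - 1) / real w * X)"
    using avg_except[OF fin_KW assms(2), of "\<lambda>c'. F m True c' r" X] assms(3)
    by (simp add: freeP_cap card_KW)
  finally show ?thesis .
qed

lemma copWV:
  assumes "c \<in> KW w" "r \<in> KV v" "\<And>c'. c' \<in> KV v \<Longrightarrow> c' \<noteq> r \<Longrightarrow> F m True c' r = X"
  shows "F (Suc m) False c r = \<theta> * ((real v - 1) / real v * X)"
proof -
  have adj: "Kadj v w c r" using assms by (simp add: Kadj_def)
  have "d c r = r" using dir_adj[OF vd v1 w1 adj inW[OF assms(1)] inV[OF assms(2)]] .
  moreover have "c \<noteq> r" using assms KVW_disj by metis
  ultimately have "F (Suc m) False c r = \<theta> * avg (KV v) (\<lambda>c'. F m True c' r)"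
    using assms by (simp add: nbrs_W freeP_cap)
  also have "\<dots> = \<theta> * ((real v - 1) / real v * X)"
    using avg_except[OF fin_KV assms(2), of "\<lambda>c'. F m True c' r" X] assms(3)
    by (simp add: freeP_cap card_KV)
  finally show ?thesis .
qed


lemma main:
  "\<forall>c r. (c \<in> KV v \<and> r \<in> KW w \<longrightarrow>
       F m True c r = ((real v - 1) / real v) ^ ((m + 3) div 4) * ((real w - 1) / real w) ^ ((m + 1) div 4))
  \<and> (c \<in> KV v \<and> r \<in> KV v \<and> c \<noteq> r \<longrightarrow>
       F m True c r = \<theta> ^ (m div 2) * ((real v - 1) / real v) ^ (m div 4) * ((real w - 1) / real w) ^ ((m + 2) div 4))
  \<and> (r \<in> KV v \<and> c \<in> KW w \<longrightarrow>
       F m True c r = ((real v - 1) / real v) ^ ((m + 1) div 4) * ((real w - 1) / real w) ^ ((m + 3) div 4))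
  \<and> (c \<in> KW w \<and> r \<in> KW w \<and> c \<noteq> r \<longrightarrow>
       F m True c r = \<theta> ^ (m div 2) * ((real v - 1) / real v) ^ ((m + 2) div 4) * ((real w - 1) / real w) ^ (m div 4))"
proof (induction m rule: less_induct)
  case (less m)
  show ?case
  proof (cases m)
    case 0
    then show ?thesis by (auto dest: KVW_disj)
  next
    case (Suc k)
    note Sk = Suc
    show ?thesis
    proof (cases k)
      case 0
      have A: "F (Suc 0) True c r = (real v - 1) / real v" if "c \<in> KV v" "r \<in> KW w" for c r
        using robA[OF that, of 0 1] by simp
      have B: "F (Suc 0) True c r = 1" if "c \<in> KV v" "c \<noteq> r" "r \<in> KV v" for c r
      proof (rule robB[OF that(2,3)])
        fix r' assume "r' \<in> KW w" then have "c \<noteq> r'" using that(1) KVW_disj by metis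
        then show "F 0 False c r' = 1" by simp
      qed
      have C: "F (Suc 0) True c r = (real w - 1) / real w" if "c \<in> KW w" "r \<in> KV v" for c r
        using robC[OF that, of 0 1] by simp
      have D: "F (Suc 0) True c r = 1" if "c \<in> KW w" "c \<noteq> r" "r \<in> KW w" for c r
      proof (rule robD[OF that(2,3)])
        fix r' assume "r' \<in> KV v" then have "c \<noteq> r'" using that(1) KVW_disj by metis
        then show "F 0 False c r' = 1" by simp
      qed
      show ?thesis using A B C D unfolding Sk 0 by auto
    next
      case (Suc j)
      have m: "m = Suc (Suc j)" using Sk Suc by simp
      have IH: "\<forall>c r. (c \<in> KV v \<and> r \<in> KW w \<longrightarrow>
       F j True c r = ((real v - 1) / real v) ^ ((j + 3) div 4) * ((real w - 1) / real w) ^ ((j + 1) div 4))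
  \<and> (c \<in> KV v \<and> r \<in> KV v \<and> c \<noteq> r \<longrightarrow>
       F j True c r = \<theta> ^ (j div 2) * ((real v - 1) / real v) ^ (j div 4) * ((real w - 1) / real w) ^ ((j + 2) div 4))
  \<and> (r \<in> KV v \<and> c \<in> KW w \<longrightarrow>
       F j True c r = ((real v - 1) / real v) ^ ((j + 1) div 4) * ((real w - 1) / real w) ^ ((j + 3) div 4))
  \<and> (c \<in> KW w \<and> r \<in> KW w \<and> c \<noteq> r \<longrightarrow>
       F j True c r = \<theta> ^ (j div 2) * ((real v - 1) / real v) ^ ((j + 2) div 4) * ((real w - 1) / real w) ^ (j div 4))"
        using less m by simp
      have IHA: "\<And>c r. c \<in> KV v \<Longrightarrow> r \<in> KW w \<Longrightarrow>
       F j True c r = ((real v - 1) / real v) ^ ((j + 3) div 4) * ((real w - 1) / real w) ^ ((j + 1) div 4)"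
        using IH by blast
      have IHB: "\<And>c r. c \<in> KV v \<Longrightarrow> r \<in> KV v \<Longrightarrow> c \<noteq> r \<Longrightarrow>
       F j True c r = \<theta> ^ (j div 2) * ((real v - 1) / real v) ^ (j div 4) * ((real w - 1) / real w) ^ ((j + 2) div 4)"
        using IH by blast
      have IHC: "\<And>c r. r \<in> KV v \<Longrightarrow> c \<in> KW w \<Longrightarrow>
       F j True c r = ((real v - 1) / real v) ^ ((j + 1) div 4) * ((real w - 1) / real w) ^ ((j + 3) div 4)"
        using IH by blast
      have IHD: "\<And>c r. c \<in> KW w \<Longrightarrow> r \<in> KW w \<Longrightarrow> c \<noteq> r \<Longrightarrow>
       F j True c r = \<theta> ^ (j div 2) * ((real v - 1) / real v) ^ ((j + 2) div 4) * ((real w - 1) / real w) ^ (j div 4)"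
        using IH by blast
      define a where "a = (real v - 1) / real v"
      define b where "b = (real w - 1) / real w"
      have e1: "(Suc (Suc j) + 3) div 4 = Suc ((j + 1) div 4)" by simp
      have e2: "(Suc (Suc j) + 1) div 4 = (j + 3) div 4" by simp
      have e3: "(Suc (Suc j) + 2) div 4 = Suc (j div 4)" by simp
      have e4: "Suc (Suc j) div 4 = (j + 2) div 4" by simp
      have e5: "Suc (Suc j) div 2 = Suc (j div 2)" by simp
      have A: "F m True c r = a * (a ^ ((j + 1) div 4) * b ^ ((j + 3) div 4))"
        if "c \<in> KV v" "r \<in> KW w" for c r
        unfolding m a_def b_def
        by (rule robA[OF that]) (rule copVV, use that IHC in auto)
      have C: "F m True c r = b * (a ^ ((j + 3) div 4) * b ^ ((j + 1) div 4))"
        if "c \<in> KW w" "r \<in> KV v" for c r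
        unfolding m a_def b_def
        by (rule robC[OF that]) (rule copWW, use that IHA in auto)
      have B: "F m True c r = \<theta> * (b * (\<theta> ^ (j div 2) * a ^ ((j + 2) div 4) * b ^ (j div 4)))"
        if "c \<in> KV v" "r \<in> KV v" "c \<noteq> r" for c r
        unfolding m a_def b_def
        by (rule robB[OF that(3,2)]) (rule copVW, use that IHD in auto)
      have D: "F m True c r = \<theta> * (a * (\<theta> ^ (j div 2) * a ^ (j div 4) * b ^ ((j + 2) div 4)))"
        if "c \<in> KW w" "r \<in> KW w" "c \<noteq> r" for c r
        unfolding m a_def b_def
        by (rule robD[OF that(3,2)]) (rule copWV, use that IHB in auto)
      show ?thesis
        unfolding a_def[symmetric] b_def[symmetric]
        unfolding m e1 e2 e3 e4 e5
      proof (intro allI conjI impI)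
        fix c r
        show "c \<in> KV v \<and> r \<in> KW w \<Longrightarrow> F (Suc (Suc j)) True c r = a ^ Suc ((j + 1) div 4) * b ^ ((j + 3) div 4)"
          using A[unfolded m] by (simp add: mult.assoc)
        show "c \<in> KV v \<and> r \<in> KV v \<and> c \<noteq> r \<Longrightarrow> F (Suc (Suc j)) True c r = \<theta> ^ Suc (j div 2) * a ^ ((j + 2) div 4) * b ^ Suc (j div 4)"
          using B[unfolded m] by (simp add: ac_simps)
        show "r \<in> KV v \<and> c \<in> KW w \<Longrightarrow> F (Suc (Suc j)) True c r = a ^ ((j + 3) div 4) * b ^ Suc ((j + 1) div 4)"
          using C[unfolded m] by (simp add: ac_simps)
        show "c \<in> KW w \<and> r \<in> KW w \<and> c \<noteq> r \<Longrightarrow> F (Suc (Suc j)) True c r = \<theta> ^ Suc (j div 2) * a ^ Suc (j div 4) * b ^ ((j + 2) div 4)"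
          using D[unfolded m] by (simp add: ac_simps)
      qed
    qed
  qed
qed

end

theorem mainTheorem4:
  fixes v w :: nat and \<theta> :: real and d :: "nat + nat \<Rightarrow> nat + nat \<Rightarrow> nat + nat"
  assumes "v \<ge> 1" and "w \<ge> 1" and "0 \<le> \<theta>" and "\<theta> \<le> 1"
    and "valid_dir (Kverts v w) (Kadj v w) d"
  shows
   "(\<forall>m c r. c \<in> KV v \<and> r \<in> KW w \<longrightarrow>
       P_free (Kverts v w) (Kadj v w) \<theta> d m c r =
         ((real v - 1) / real v) ^ ((m + 3) div 4) * ((real w - 1) / real w) ^ ((m + 1) div 4))
  \<and> (\<forall>m c r. c \<in> KV v \<and> r \<in> KV v \<and> c \<noteq> r \<longrightarrow>
       P_free (Kverts v w) (Kadj v w) \<theta> d m c r =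
         \<theta> ^ (m div 2) * ((real v - 1) / real v) ^ (m div 4) * ((real w - 1) / real w) ^ ((m + 2) div 4))
  \<and> (\<forall>m c r. r \<in> KV v \<and> c \<in> KW w \<longrightarrow>
       P_free (Kverts v w) (Kadj v w) \<theta> d m c r =
         ((real v - 1) / real v) ^ ((m + 1) div 4) * ((real w - 1) / real w) ^ ((m + 3) div 4))
  \<and> (\<forall>m c r. c \<in> KW w \<and> r \<in> KW w \<and> c \<noteq> r \<longrightarrow>
       P_free (Kverts v w) (Kadj v w) \<theta> d m c r =
         \<theta> ^ (m div 2) * ((real v - 1) / real v) ^ ((m + 2) div 4) * ((real w - 1) / real w) ^ (m div 4))"
  using main[OF assms(1,2,5)] unfolding P_free_def by blast

end
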